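(* Let $a\in G$ and define $\psi(x,y,v)=K_{a,v}(x,y)$ for $x\in G$, $y,v\in Y$. Then $\psi\in\mathcal A$ and $\rho(a)=S_\psi$.
   Context: Let $G$ be a locally compact abelian group (written additively) with Haar measure $\nu$, and $(Y,\lambda)$ a measure space. Let $H$ be a reproducing kernel Hilbert space of complex functions on $G\times Y$ whose inner product is that of $L^2(G\times Y,\nu\otimes\lambda)$, with reproducing kernel $(K_{x,y})_{(x,y)\in G\times Y}$ (so $f(x,y)=\langle f,K_{x,y}\rangle$). Assume $K_{x,y}(u,v)=K_{0,y}(u-x,v)$ for all $u,x\in G$, $v,y\in Y$. For $a\in G$ let $(\rho(a)f)(x,y)=f(x-a,y)$, a unitary operator on $H$. Let $\mathcal A_0$ be the set of functions $\psi\colon G\times Y\times Y\to\mathbb C$ such that $\psi(\cdot,\cdot,v)\in H$ for every $v\in Y$ and $(u,v)\mapsto\overline{\psi(-u,y,v)}$ belongs to $H$ for every $y\in Y$. For $\psi\in\mathcal A_0$, $f\in H$, define $(S_\psi f)(x,y)=\int_{G\times Y}f(u,v)\psi(x-u,y,v)\,d\nu(u)\,d\lambda(v)$. Let $\mathcal A$ be the set of $\psi\in\mathcal A_0$ such that $S_\psi f\in H$ for all $f\in H$ and $S_\psi$ is bounded on $H$. *)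

theory Defs
  imports "HOL-Analysis.Analysis"
begin

definition lca_group :: "'g::{ab_group_add, t2_space} itself \<Rightarrow> bool" where
  "lca_group _ \<longleftrightarrow>
     locally_compact_space (euclidean :: 'g topology) \<and>
     continuous_on UNIV (\<lambda>p::'g \<times> 'g. fst p + snd p) \<and>
     continuous_on UNIV (\<lambda>x::'g. - x)"

definition haar_measure :: "'g::{ab_group_add, t2_space} measure \<Rightarrow> bool" where
  "haar_measure nu \<longleftrightarrow>
     sets nu = sets borel \<and>
     (\<forall>a. \<forall>A\<in>sets borel. emeasure nu ((\<lambda>x. a + x) ` A) = emeasure nu A) \<and>
     (\<forall>C. compact C \<longrightarrow> emeasure nu C < \<infinity>) \<and>
     (\<forall>A\<in>sets borel. emeasure nu A = (INF U\<in>{U. open U \<and> A \<subseteq> U}. emeasure nu U)) \<and>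
     (\<forall>U. open U \<longrightarrow> emeasure nu U = (SUP C\<in>{C. compact C \<and> C \<subseteq> U}. emeasure nu C)) \<and>
     emeasure nu UNIV \<noteq> 0"

abbreviation prodM :: "'g::{ab_group_add, t2_space} measure \<Rightarrow> 'y measure \<Rightarrow> ('g \<times> 'y) measure" where
  "prodM nu lam \<equiv> nu \<Otimes>\<^sub>M lam"

definition L2inner :: "('g \<times> 'y) measure \<Rightarrow> ('g \<times> 'y \<Rightarrow> complex) \<Rightarrow> ('g \<times> 'y \<Rightarrow> complex) \<Rightarrow> complex" where
  "L2inner M f g = (LINT z|M. f z * cnj (g z))"

definition L2norm :: "('g \<times> 'y) measure \<Rightarrow> ('g \<times> 'y \<Rightarrow> complex) \<Rightarrow> real" where
  "L2norm M f = sqrt (LINT z|M. (cmod (f z))\<^sup>2)"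

definition square_integrable :: "('g \<times> 'y) measure \<Rightarrow> ('g \<times> 'y \<Rightarrow> complex) \<Rightarrow> bool" where
  "square_integrable M f \<longleftrightarrow> f \<in> borel_measurable M \<and> integrable M (\<lambda>z. (cmod (f z))\<^sup>2)"

text \<open>Membership in H of a function considered only on G \<times> Y (Y = space lam).\<close>
definition memH :: "('g \<times> 'y \<Rightarrow> complex) set \<Rightarrow> 'y set \<Rightarrow> ('g \<times> 'y \<Rightarrow> complex) \<Rightarrow> bool" where
  "memH H Y f \<longleftrightarrow> (\<exists>h\<in>H. \<forall>x. \<forall>y\<in>Y. h (x, y) = f (x, y))"

text \<open>H is a reproducing kernel Hilbert space of functions on G \<times> Y with the L^2 inner product,
  with reproducing kernel K (K x y = K_{x,y}).\<close>
definition rkhs :: "'g::{ab_group_add, t2_space} measure \<Rightarrow> 'y measure \<Rightarrow> ('g \<times> 'y \<Rightarrow> complex) set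
                     \<Rightarrow> ('g \<Rightarrow> 'y \<Rightarrow> 'g \<times> 'y \<Rightarrow> complex) \<Rightarrow> bool" where
  "rkhs nu lam H K \<longleftrightarrow>
     (\<forall>f\<in>H. square_integrable (prodM nu lam) f) \<and>
     (\<lambda>_. 0) \<in> H \<and>
     (\<forall>f\<in>H. \<forall>g\<in>H. (\<lambda>z. f z + g z) \<in> H) \<and>
     (\<forall>c. \<forall>f\<in>H. (\<lambda>z. c * f z) \<in> H) \<and>
     (\<forall>F :: nat \<Rightarrow> ('g \<times> 'y \<Rightarrow> complex). (\<forall>n. F n \<in> H) \<and>
        (\<forall>e>0. \<exists>N. \<forall>m\<ge>N. \<forall>n\<ge>N. L2norm (prodM nu lam) (\<lambda>z. F m z - F n z) < e) \<longrightarrow>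
        (\<exists>f\<in>H. (\<lambda>n. L2norm (prodM nu lam) (\<lambda>z. F n z - f z)) \<longlonglongrightarrow> 0)) \<and>
     (\<forall>x. \<forall>y\<in>space lam. K x y \<in> H) \<and>
     (\<forall>f\<in>H. \<forall>x. \<forall>y\<in>space lam. f (x, y) = L2inner (prodM nu lam) f (K x y))"

text \<open>The operator S_\<psi>, with \<psi> : G \<times> Y \<times> Y \<rightarrow> C written curried.\<close>
definition S_op :: "'g::{ab_group_add, t2_space} measure \<Rightarrow> 'y measure \<Rightarrow> ('g \<Rightarrow> 'y \<Rightarrow> 'y \<Rightarrow> complex)
                    \<Rightarrow> ('g \<times> 'y \<Rightarrow> complex) \<Rightarrow> ('g \<times> 'y \<Rightarrow> complex)" where
  "S_op nu lam \<psi> f = (\<lambda>(x, y). LINT z|prodM nu lam. f z * \<psi> (x - fst z) y (snd z))"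

definition in_A0 :: "'y measure \<Rightarrow> ('g::{ab_group_add, t2_space} \<times> 'y \<Rightarrow> complex) set
                     \<Rightarrow> ('g \<Rightarrow> 'y \<Rightarrow> 'y \<Rightarrow> complex) \<Rightarrow> bool" where
  "in_A0 lam H \<psi> \<longleftrightarrow>
     (\<forall>v\<in>space lam. memH H (space lam) (\<lambda>(x, y). \<psi> x y v)) \<and>
     (\<forall>y\<in>space lam. memH H (space lam) (\<lambda>(u, v). cnj (\<psi> (- u) y v)))"

definition in_A :: "'g::{ab_group_add, t2_space} measure \<Rightarrow> 'y measure \<Rightarrow> ('g \<times> 'y \<Rightarrow> complex) set
                    \<Rightarrow> ('g \<Rightarrow> 'y \<Rightarrow> 'y \<Rightarrow> complex) \<Rightarrow> bool" where
  "in_A nu lam H \<psi> \<longleftrightarrow>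
     in_A0 lam H \<psi> \<and>
     (\<forall>f\<in>H. memH H (space lam) (S_op nu lam \<psi> f)) \<and>
     (\<exists>C. \<forall>f\<in>H. L2norm (prodM nu lam) (S_op nu lam \<psi> f) \<le> C * L2norm (prodM nu lam) f)"

end

theory Submission
  imports Defs
begin

lemma haar_sets: "haar_measure nu \<Longrightarrow> sets nu = sets borel"
  unfolding haar_measure_def by (elim conjE, assumption)

lemma lca_trans_cont:
  assumes "lca_group TYPE('g::{ab_group_add, t2_space})"
  shows "continuous_on UNIV (\<lambda>x::'g. x + b)"
proof -
  have c: "continuous_on UNIV (\<lambda>p::'g \<times> 'g. fst p + snd p)" using conjunct1[OF conjunct2[OF assms[unfolded lca_group_def]]] .
  have "continuous_on UNIV (\<lambda>x::'g. (x, b))" by (intro continuous_intros)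
  from continuous_on_compose2[OF c this subset_UNIV] show ?thesis by simp
qed

lemma lca_trans_meas:
  assumes "lca_group TYPE('g::{ab_group_add, t2_space})" "sets nu = sets (borel :: 'g measure)"
  shows "(\<lambda>x::'g. x + b) \<in> measurable nu nu"
proof -
  have "(\<lambda>x::'g. x + b) \<in> borel_measurable borel"
    by (rule borel_measurable_continuous_onI[OF lca_trans_cont[OF assms(1)]])
  then show ?thesis using measurable_cong_sets[OF assms(2) assms(2)] by simp
qed
lemma haar_inv: "haar_measure nu \<Longrightarrow> A \<in> sets borel \<Longrightarrow> emeasure nu ((\<lambda>x. a + x) ` A) = emeasure nu A"
  using conjunct1[OF conjunct2[OF iffD1[OF haar_measure_def]]] by blast

lemma haar_distr:
  assumes "lca_group TYPE('g::{ab_group_add, t2_space})" "haar_measure (nu :: 'g measure)"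
  shows "distr nu nu (\<lambda>x. x + b) = nu"
proof (rule measure_eqI)
  have s: "sets nu = sets borel" using assms(2) by (rule haar_sets)
  have sp: "space nu = UNIV" using sets_eq_imp_space_eq[OF s] by simp
  show "sets (distr nu nu (\<lambda>x. x + b)) = sets nu" by simp
  fix A assume "A \<in> sets (distr nu nu (\<lambda>x. x + b))"
  then have A: "A \<in> sets borel" using s by simp
  have "emeasure (distr nu nu (\<lambda>x. x + b)) A = emeasure nu ((\<lambda>x. x + b) -` A \<inter> space nu)"
    using A s by (intro emeasure_distr lca_trans_meas[OF assms(1) s]) auto
  also have "(\<lambda>x. x + b) -` A \<inter> space nu = (\<lambda>x. (-b) + x) ` A"
    using sp by (auto simp: image_iff) (metis add.commute diff_add_cancel diff_conv_add_uminus)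
  also have "emeasure nu \<dots> = emeasure nu A" using haar_inv[OF assms(2) A] .
  finally show "emeasure (distr nu nu (\<lambda>x. x + b)) A = emeasure nu A" .
qed

lemma haar_nn_le:
  assumes "lca_group TYPE('g::{ab_group_add, t2_space})" "haar_measure (nu :: 'g measure)"
  shows "(\<integral>\<^sup>+x. F (x + b) \<partial>nu) \<le> (\<integral>\<^sup>+x. F x \<partial>nu)"
proof -
  have s: "sets nu = sets borel" using assms(2) by (rule haar_sets)
  have "integral\<^sup>N nu (\<lambda>x. F (x + b)) = (SUP g\<in>{g. simple_function nu g \<and> g \<le> (\<lambda>x. F (x + b))}. integral\<^sup>S nu g)"
    by (rule nn_integral_def)
  also have "\<dots> \<le> (\<integral>\<^sup>+x. F x \<partial>nu)"
  proof (rule SUP_least)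
    fix g assume "g \<in> {g. simple_function nu g \<and> g \<le> (\<lambda>x. F (x + b))}"
    then have g: "simple_function nu g" "g \<le> (\<lambda>x. F (x + b))" by auto
    define g' where "g' = (\<lambda>x. g (x + (-b)))"
    have sg': "simple_function nu g'" unfolding g'_def
      by (rule simple_function_comp[OF lca_trans_meas[OF assms(1) s] g(1)])
    have g'F: "g' x \<le> F x" for x
      using le_funD[OF g(2), of "x + (-b)"] by (simp add: g'_def)
    have gg: "g = (\<lambda>x. g' (x + b))" by (simp add: g'_def)
    have mg': "g' \<in> borel_measurable (distr nu nu (\<lambda>x. x + b))"
      using borel_measurable_simple_function[OF sg'] measurable_cong_sets[OF sets_distr[of nu nu "\<lambda>x. x + b"] refl] by simp
    have "integral\<^sup>S nu g = integral\<^sup>N nu g"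
      by (rule nn_integral_eq_simple_integral[OF g(1), symmetric])
    also have "\<dots> = integral\<^sup>N nu (\<lambda>x. g' (x + b))" using gg by simp
    also have "\<dots> = integral\<^sup>N (distr nu nu (\<lambda>x. x + b)) g'"
      by (rule nn_integral_distr[OF lca_trans_meas[OF assms(1) s] mg', symmetric])
    also have "\<dots> = integral\<^sup>N nu g'" using haar_distr[OF assms] by simp
    also have "\<dots> \<le> integral\<^sup>N nu F" by (rule nn_integral_mono) (rule g'F)
    finally show "integral\<^sup>S nu g \<le> integral\<^sup>N nu F" .
  qed
  finally show ?thesis .
qed

lemma haar_nn:
  assumes "lca_group TYPE('g::{ab_group_add, t2_space})" "haar_measure (nu :: 'g measure)"
  shows "(\<integral>\<^sup>+x. F (x + b) \<partial>nu) = (\<integral>\<^sup>+x. F x \<partial>nu)"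
proof (rule antisym)
  show "(\<integral>\<^sup>+x. F (x + b) \<partial>nu) \<le> (\<integral>\<^sup>+x. F x \<partial>nu)" by (rule haar_nn_le[OF assms])
  have "(\<integral>\<^sup>+x. F (x + (-b) + b) \<partial>nu) \<le> (\<integral>\<^sup>+x. F (x + b) \<partial>nu)"
    by (rule haar_nn_le[OF assms, of "\<lambda>x. F (x + b)" "-b"])
  then show "(\<integral>\<^sup>+x. F x \<partial>nu) \<le> (\<integral>\<^sup>+x. F (x + b) \<partial>nu)" by simp
qed

lemma shift_meas:
  assumes "lca_group TYPE('g::{ab_group_add, t2_space})" "haar_measure (nu :: 'g measure)"
  shows "(\<lambda>z::'g \<times> 'y. (fst z + b, snd z)) \<in> measurable (nu \<Otimes>\<^sub>M lam) (nu \<Otimes>\<^sub>M lam)"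
proof -
  have s: "sets nu = sets borel" using assms(2) by (rule haar_sets)
  show ?thesis
    by (intro measurable_Pair measurable_compose[OF measurable_fst lca_trans_meas[OF assms(1) s]] measurable_snd)
qed

lemma prod_distr:
  assumes "lca_group TYPE('g::{ab_group_add, t2_space})" "haar_measure (nu :: 'g measure)"
  shows "distr (nu \<Otimes>\<^sub>M lam) (nu \<Otimes>\<^sub>M lam) (\<lambda>z::'g \<times> 'y. (fst z + b, snd z)) = nu \<Otimes>\<^sub>M lam"
    (is "distr ?M ?M ?t = ?M")
proof (rule measure_eqI)
  have s: "sets nu = sets borel" using assms(2) by (rule haar_sets)
  have sp: "space nu = UNIV" using sets_eq_imp_space_eq[OF s] by simp
  show "sets (distr ?M ?M ?t) = sets ?M" by simp
  fix X assume "X \<in> sets (distr ?M ?M ?t)"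
  then have X: "X \<in> sets ?M" by simp
  have Y: "?t -` X \<inter> space ?M \<in> sets ?M"
    using shift_meas[OF assms, of b lam] X by (rule measurable_sets)
  let ?mu = "(\<lambda>X. \<integral>\<^sup>+x. (\<integral>\<^sup>+y. indicator X (x,y) \<partial>lam) \<partial>nu)"
  let ?E = "{a \<times> b | a b. a \<in> sets nu \<and> b \<in> sets lam}"
  have em: "emeasure ?M Z = (if Z \<in> sigma_sets (space nu \<times> space lam) ?E \<and> measure_space (space nu \<times> space lam) (sigma_sets (space nu \<times> space lam) ?E) ?mu then ?mu Z else 0)" for Z
    unfolding pair_measure_def emeasure_measure_of_conv by simp
  have ss: "sets ?M = sigma_sets (space nu \<times> space lam) ?E" by (rule sets_pair_measure)
  have "?mu (?t -` X \<inter> space ?M) = ?mu X"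
  proof -
    have "?mu (?t -` X \<inter> space ?M) = (\<integral>\<^sup>+x. (\<integral>\<^sup>+y. indicator X (x + b, y) \<partial>lam) \<partial>nu)"
      by (intro nn_integral_cong) (auto simp: space_pair_measure sp indicator_def)
    also have "\<dots> = ?mu X" by (rule haar_nn[OF assms, of "\<lambda>x. \<integral>\<^sup>+y. indicator X (x, y) \<partial>lam"])
    finally show ?thesis .
  qed
  then have "emeasure ?M (?t -` X \<inter> space ?M) = emeasure ?M X"
    using X Y unfolding em ss by simp
  then show "emeasure (distr ?M ?M ?t) X = emeasure ?M X"
    using X by (simp add: emeasure_distr[OF shift_meas[OF assms]])
qed

lemma prod_integral:
  fixes f :: "'g::{ab_group_add, t2_space} \<times> 'y \<Rightarrow> 'b::{banach, second_countable_topology}"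
  assumes "lca_group TYPE('g)" "haar_measure (nu :: 'g measure)"
    and f: "f \<in> borel_measurable (nu \<Otimes>\<^sub>M lam)"
  shows "(LINT z|(nu \<Otimes>\<^sub>M lam). f (fst z + b, snd z)) = (LINT z|(nu \<Otimes>\<^sub>M lam). f z)"
    and "integrable (nu \<Otimes>\<^sub>M lam) (\<lambda>z. f (fst z + b, snd z)) \<longleftrightarrow> integrable (nu \<Otimes>\<^sub>M lam) f"
proof -
  show "(LINT z|(nu \<Otimes>\<^sub>M lam). f (fst z + b, snd z)) = (LINT z|(nu \<Otimes>\<^sub>M lam). f z)"
    using integral_distr[OF shift_meas[OF assms(1,2)] f, of b] prod_distr[OF assms(1,2), where b=b and lam=lam] by simp
  show "integrable (nu \<Otimes>\<^sub>M lam) (\<lambda>z. f (fst z + b, snd z)) \<longleftrightarrow> integrable (nu \<Otimes>\<^sub>M lam) f"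
    using integrable_distr_eq[OF shift_meas[OF assms(1,2)] f, of b] prod_distr[OF assms(1,2), where b=b and lam=lam] by simp
qed



lemma cnj_meas[measurable]: "f \<in> borel_measurable M \<Longrightarrow> (\<lambda>x. cnj (f x)) \<in> borel_measurable M"
proof -
  have "continuous_on UNIV cnj" by (intro continuous_intros)
  then have "cnj \<in> borel_measurable borel" by (rule borel_measurable_continuous_onI)
  moreover assume "f \<in> borel_measurable M"
  ultimately show ?thesis using measurable_compose by blast
qed

lemma sqi_meas: "square_integrable M f \<Longrightarrow> f \<in> borel_measurable M"
  and sqi_int: "square_integrable M f \<Longrightarrow> integrable M (\<lambda>z. (cmod (f z))\<^sup>2)"
  by (simp_all add: square_integrable_def)

lemma real_sq_add_le: "((x::real) + y)\<^sup>2 \<le> 2 * x\<^sup>2 + 2 * y\<^sup>2"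
proof -
  have "0 \<le> (x - y)\<^sup>2" by simp
  then show ?thesis by (simp add: power2_eq_square algebra_simps)
qed

lemma real_prod_le: "(x::real) \<ge> 0 \<Longrightarrow> y \<ge> 0 \<Longrightarrow> x * y \<le> x\<^sup>2 + y\<^sup>2"
proof -
  assume "x \<ge> 0" "y \<ge> 0"
  then have "0 \<le> x * y" by simp
  moreover have "0 \<le> (x - y)\<^sup>2" by simp
  ultimately show ?thesis by (simp add: power2_eq_square algebra_simps)
qed

lemma sq_add_le: "(cmod (a + b))\<^sup>2 \<le> 2 * (cmod a)\<^sup>2 + 2 * (cmod b)\<^sup>2"
proof -
  have "cmod (a + b) \<le> cmod a + cmod b" by (rule norm_triangle_ineq)
  then have "(cmod (a + b))\<^sup>2 \<le> (cmod a + cmod b)\<^sup>2" by (simp add: power_mono)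
  also have "\<dots> \<le> 2 * (cmod a)\<^sup>2 + 2 * (cmod b)\<^sup>2" by (rule real_sq_add_le)
  finally show ?thesis .
qed

lemma sqi_add: "square_integrable M f \<Longrightarrow> square_integrable M g \<Longrightarrow> square_integrable M (\<lambda>z. f z + g z)"
  unfolding square_integrable_def
proof (intro conjI)
  assume "f \<in> borel_measurable M \<and> integrable M (\<lambda>z. (cmod (f z))\<^sup>2)" "g \<in> borel_measurable M \<and> integrable M (\<lambda>z. (cmod (g z))\<^sup>2)"
  then have m: "f \<in> borel_measurable M" "g \<in> borel_measurable M" and i: "integrable M (\<lambda>z. (cmod (f z))\<^sup>2)" "integrable M (\<lambda>z. (cmod (g z))\<^sup>2)" by auto
  show "(\<lambda>z. f z + g z) \<in> borel_measurable M" using m by simp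
  show "integrable M (\<lambda>z. (cmod (f z + g z))\<^sup>2)"
  proof (rule Bochner_Integration.integrable_bound)
    show "integrable M (\<lambda>z. 2 * (cmod (f z))\<^sup>2 + 2 * (cmod (g z))\<^sup>2)" using i by simp
    show "(\<lambda>z. (cmod (f z + g z))\<^sup>2) \<in> borel_measurable M" using m by simp
    show "AE x in M. norm ((cmod (f x + g x))\<^sup>2) \<le> norm (2 * (cmod (f x))\<^sup>2 + 2 * (cmod (g x))\<^sup>2)"
      using sq_add_le by (auto intro!: AE_I2 simp del: norm_mult)
  qed
qed

lemma sqi_scale: "square_integrable M f \<Longrightarrow> square_integrable M (\<lambda>z. c * f z)"
  unfolding square_integrable_def by (auto simp: norm_mult power_mult_distrib)

lemma sqi_diff: "square_integrable M f \<Longrightarrow> square_integrable M g \<Longrightarrow> square_integrable M (\<lambda>z. f z - g z)"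
  using sqi_add[of M f "\<lambda>z. (-1) * g z"] sqi_scale[of M g "-1"] by simp

lemma sqi_prod: "square_integrable M f \<Longrightarrow> square_integrable M g \<Longrightarrow> integrable M (\<lambda>z. f z * cnj (g z))"
proof -
  assume a: "square_integrable M f" "square_integrable M g"
  show ?thesis
  proof (rule Bochner_Integration.integrable_bound)
    show "integrable M (\<lambda>z. (cmod (f z))\<^sup>2 + (cmod (g z))\<^sup>2)" using a by (simp add: square_integrable_def)
    show "(\<lambda>z. f z * cnj (g z)) \<in> borel_measurable M" using a by (auto simp: square_integrable_def intro!: borel_measurable_times cnj_meas)
    have "cmod (f x * cnj (g x)) \<le> (cmod (f x))\<^sup>2 + (cmod (g x))\<^sup>2" for x
      unfolding norm_mult complex_mod_cnj by (rule real_prod_le) simp_all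
    then show "AE x in M. norm (f x * cnj (g x)) \<le> norm ((cmod (f x))\<^sup>2 + (cmod (g x))\<^sup>2)"
      by (auto intro!: AE_I2)
  qed
qed

lemma pt_expand: "(cmod (a - t * b))\<^sup>2 = (cmod a)\<^sup>2 - 2 * Re (cnj t * (a * cnj b)) + (cmod t)\<^sup>2 * (cmod b)\<^sup>2"
  unfolding cmod_power2 by (simp add: power2_eq_square algebra_simps)

lemma l2_expand:
  assumes w: "square_integrable M w" and k: "square_integrable M k"
  shows "(LINT z|M. (cmod (w z - t * k z))\<^sup>2) =
    (LINT z|M. (cmod (w z))\<^sup>2) - 2 * Re (cnj t * L2inner M w k) + (cmod t)\<^sup>2 * (LINT z|M. (cmod (k z))\<^sup>2)"
proof -
  have i1: "integrable M (\<lambda>z. (cmod (w z))\<^sup>2)" using w by (rule sqi_int)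
  have i3: "integrable M (\<lambda>z. (cmod (k z))\<^sup>2)" using k by (rule sqi_int)
  have ip: "integrable M (\<lambda>z. cnj t * (w z * cnj (k z)))" using sqi_prod[OF w k] by simp
  have i2: "integrable M (\<lambda>z. 2 * Re (cnj t * (w z * cnj (k z))))" by (rule integrable_mult_right) (rule integrable_Re[OF ip])
  have "(LINT z|M. (cmod (w z - t * k z))\<^sup>2) =
     (LINT z|M. ((cmod (w z))\<^sup>2 - 2 * Re (cnj t * (w z * cnj (k z)))) + (cmod t)\<^sup>2 * (cmod (k z))\<^sup>2)"
    by (rule Bochner_Integration.integral_cong) (simp_all add: pt_expand)
  also have "\<dots> = (LINT z|M. (cmod (w z))\<^sup>2 - 2 * Re (cnj t * (w z * cnj (k z)))) + (LINT z|M. (cmod t)\<^sup>2 * (cmod (k z))\<^sup>2)"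
    by (rule Bochner_Integration.integral_add[of M "\<lambda>z. (cmod (w z))\<^sup>2 - 2 * Re (cnj t * (w z * cnj (k z)))" "\<lambda>z. (cmod t)\<^sup>2 * (cmod (k z))\<^sup>2"])
       (rule Bochner_Integration.integrable_diff[OF i1 i2], rule integrable_mult_right[OF i3])
  also have "(LINT z|M. (cmod (w z))\<^sup>2 - 2 * Re (cnj t * (w z * cnj (k z)))) = (LINT z|M. (cmod (w z))\<^sup>2) - (LINT z|M. 2 * Re (cnj t * (w z * cnj (k z))))"
    using i1 i2 by (rule Bochner_Integration.integral_diff)
  also have "(LINT z|M. 2 * Re (cnj t * (w z * cnj (k z)))) = 2 * Re (cnj t * L2inner M w k)"
    unfolding L2inner_def Bochner_Integration.integral_mult_right_zero Bochner_Integration.integral_Re[OF ip] by (rule refl)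
  also have "(LINT z|M. (cmod t)\<^sup>2 * (cmod (k z))\<^sup>2) = (cmod t)\<^sup>2 * (LINT z|M. (cmod (k z))\<^sup>2)"
    by simp
  finally show ?thesis .
qed

lemma l2_cs:
  assumes w: "square_integrable M w" and k: "square_integrable M k"
  shows "(cmod (L2inner M w k))\<^sup>2 \<le> ((LINT z|M. (cmod (k z))\<^sup>2) + 1) * (LINT z|M. (cmod (w z))\<^sup>2)"
proof -
  define N where "N = (LINT z|M. (cmod (k z))\<^sup>2)"
  define W where "W = (LINT z|M. (cmod (w z))\<^sup>2)"
  define c where "c = L2inner M w k"
  define s where "s = 1 / (N + 1)"
  have N0: "N \<ge> 0" unfolding N_def by simp
  have s0: "s > 0" using N0 by (simp add: s_def)
  have "0 \<le> (LINT z|M. (cmod (w z - (of_real s * c) * k z))\<^sup>2)" by simp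
  also have "\<dots> = W - 2 * Re (cnj (of_real s * c) * c) + (cmod (of_real s * c))\<^sup>2 * N"
    unfolding W_def N_def c_def by (rule l2_expand[OF w k])
  also have "Re (cnj (of_real s * c) * c) = s * (cmod c)\<^sup>2"
    unfolding cmod_power2 by (simp add: power2_eq_square algebra_simps)
  also have "(cmod (of_real s * c))\<^sup>2 = s\<^sup>2 * (cmod c)\<^sup>2"
    using s0 by (simp add: norm_mult power_mult_distrib)
  finally have ineq: "s * (cmod c)\<^sup>2 * (2 - s * N) \<le> W" by (simp add: algebra_simps power2_eq_square)
  have "s * N \<le> 1" using N0 by (simp add: s_def)
  then have "s * (cmod c)\<^sup>2 * 1 \<le> s * (cmod c)\<^sup>2 * (2 - s * N)"
    using s0 by (intro mult_left_mono) auto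
  with ineq have "s * (cmod c)\<^sup>2 \<le> W" by simp
  then have "(cmod c)\<^sup>2 \<le> (N + 1) * W" using N0 by (simp add: s_def field_simps)
  then show ?thesis unfolding N_def W_def c_def .
qed



lemma key_alg:
  fixes N C e s W :: real
  assumes N0: "N \<ge> 0" and C0: "C \<ge> 0" and s: "s = 1 / (N + 1)"
    and h: "W - e \<le> W - 2 * s * C + s\<^sup>2 * C * N"
  shows "C \<le> (N + 1) * e"
proof -
  have s0: "s > 0" using N0 s by simp
  have ineq: "s * C * (2 - s * N) \<le> e" using h by (simp add: algebra_simps power2_eq_square)
  have "s * N \<le> 1" using N0 by (simp add: s)
  then have "s * C * 1 \<le> s * C * (2 - s * N)"
    using s0 C0 by (intro mult_left_mono) auto
  with ineq have "s * C \<le> e" by simp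
  then show "C \<le> (N + 1) * e" using N0 by (simp add: s field_simps)
qed

lemma l2_parallel:
  assumes u: "square_integrable M u" and v: "square_integrable M v"
  shows "(LINT z|M. (cmod (u z - v z))\<^sup>2) = 2 * (LINT z|M. (cmod (u z))\<^sup>2) + 2 * (LINT z|M. (cmod (v z))\<^sup>2) - (LINT z|M. (cmod (u z + v z))\<^sup>2)"
proof -
  have pt: "(cmod (a - b))\<^sup>2 = 2 * (cmod a)\<^sup>2 + 2 * (cmod b)\<^sup>2 - (cmod (a + b))\<^sup>2" for a b :: complex
    unfolding cmod_power2 by (simp add: power2_eq_square algebra_simps)
  have i1: "integrable M (\<lambda>z. (cmod (u z))\<^sup>2)" using u by (rule sqi_int)
  have i2: "integrable M (\<lambda>z. (cmod (v z))\<^sup>2)" using v by (rule sqi_int)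
  have i3: "integrable M (\<lambda>z. (cmod (u z + v z))\<^sup>2)" using sqi_add[OF u v] by (rule sqi_int)
  have "(LINT z|M. (cmod (u z - v z))\<^sup>2) = (LINT z|M. (2 * (cmod (u z))\<^sup>2 + 2 * (cmod (v z))\<^sup>2) - (cmod (u z + v z))\<^sup>2)"
    by (rule Bochner_Integration.integral_cong) (simp_all add: pt)
  also have "\<dots> = (LINT z|M. 2 * (cmod (u z))\<^sup>2 + 2 * (cmod (v z))\<^sup>2) - (LINT z|M. (cmod (u z + v z))\<^sup>2)"
    by (rule Bochner_Integration.integral_diff[OF _ i3]) (intro Bochner_Integration.integrable_add integrable_mult_right i1 i2)
  also have "(LINT z|M. 2 * (cmod (u z))\<^sup>2 + 2 * (cmod (v z))\<^sup>2) = (LINT z|M. 2 * (cmod (u z))\<^sup>2) + (LINT z|M. 2 * (cmod (v z))\<^sup>2)"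
    by (rule Bochner_Integration.integral_add) (intro integrable_mult_right i1, intro integrable_mult_right i2)
  finally show ?thesis by simp
qed

lemma l2_inner_diff:
  assumes "square_integrable M f" "square_integrable M h" "square_integrable M k"
  shows "L2inner M (\<lambda>z. f z - h z) k = L2inner M f k - L2inner M h k"
proof -
  have "L2inner M (\<lambda>z. f z - h z) k = (CLINT z|M. f z * cnj (k z) - h z * cnj (k z))"
    unfolding L2inner_def by (simp add: algebra_simps)
  also have "\<dots> = L2inner M f k - L2inner M h k"
    unfolding L2inner_def using sqi_prod[OF assms(1,3)] sqi_prod[OF assms(2,3)]
    by (rule Bochner_Integration.integral_diff)
  finally show ?thesis .
qed



lemma proj:
  fixes nu :: "'g::{ab_group_add, t2_space} measure" and lam :: "'b measure"
  assumes rk: "rkhs nu lam H K"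
    and g: "square_integrable (prodM nu lam) g"
    and rep: "\<forall>x. \<forall>y\<in>space lam. g (x, y) = L2inner (prodM nu lam) g (K x y)"
  shows "memH H (space lam) g"
proof -
  define M where "M = prodM nu lam"
  have Hsq: "\<And>f. f \<in> H \<Longrightarrow> square_integrable M f" using rk unfolding rkhs_def M_def by blast
  have H0: "(\<lambda>_. 0) \<in> H" using rk unfolding rkhs_def by blast
  have Hadd: "\<And>f h. f \<in> H \<Longrightarrow> h \<in> H \<Longrightarrow> (\<lambda>z. f z + h z) \<in> H" using rk unfolding rkhs_def by blast
  have Hscale: "\<And>c f. f \<in> H \<Longrightarrow> (\<lambda>z. c * f z) \<in> H" using rk unfolding rkhs_def by blast
  have Hcomp: "\<And>F :: nat \<Rightarrow> ('g \<times> 'b \<Rightarrow> complex). (\<forall>n. F n \<in> H) \<Longrightarrow>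
        (\<forall>e>0. \<exists>N. \<forall>m\<ge>N. \<forall>n\<ge>N. L2norm M (\<lambda>z. F m z - F n z) < e) \<Longrightarrow>
        (\<exists>f\<in>H. (\<lambda>n. L2norm M (\<lambda>z. F n z - f z)) \<longlonglongrightarrow> 0)"
    using rk unfolding rkhs_def M_def by blast
  have HK: "\<And>x y. y \<in> space lam \<Longrightarrow> K x y \<in> H" using rk unfolding rkhs_def by blast
  have Hrep: "\<And>f x y. f \<in> H \<Longrightarrow> y \<in> space lam \<Longrightarrow> f (x, y) = L2inner M f (K x y)"
    using rk unfolding rkhs_def M_def by blast
  have g: "square_integrable M g" using g by (simp add: M_def)
  define Q where "Q h = (LINT z|M. (cmod (g z - h z))\<^sup>2)" for h
  define D where "D = Inf (Q ` H)"
  have Q0: "Q h \<ge> 0" for h unfolding Q_def by simp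
  have bdd: "bdd_below (Q ` H)" using Q0 by (intro bdd_belowI) auto
  have DQ: "D \<le> Q h" if "h \<in> H" for h unfolding D_def using bdd that by (intro cInf_lower) auto
  have "\<exists>h\<in>H. Q h < D + 1 / (real n + 1)" for n
  proof -
    have "Inf (Q ` H) < D + 1 / (real n + 1)" unfolding D_def by simp
    then show ?thesis using cInf_less_iff[of "Q ` H"] bdd H0 by blast
  qed
  then obtain F where F: "\<And>n. F n \<in> H" and FQ: "\<And>n. Q (F n) < D + 1 / (real n + 1)"
    by metis
  have Fsq: "square_integrable M (F n)" for n using Hsq[OF F] .
  have Pbound: "(LINT z|M. (cmod (F m z - F n z))\<^sup>2) \<le> 2 / (real n + 1) + 2 / (real m + 1)" for m n
  proof -
    define w where "w = (\<lambda>z. (1/2) * (F n z + F m z))"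
    have wH: "w \<in> H" unfolding w_def by (intro Hscale Hadd F)
    have u: "square_integrable M (\<lambda>z. g z - F n z)" by (rule sqi_diff[OF g Fsq])
    have v: "square_integrable M (\<lambda>z. g z - F m z)" by (rule sqi_diff[OF g Fsq])
    have "(LINT z|M. (cmod (F m z - F n z))\<^sup>2) = (LINT z|M. (cmod ((g z - F n z) - (g z - F m z)))\<^sup>2)"
      by (rule Bochner_Integration.integral_cong) simp_all
    also have "\<dots> = 2 * Q (F n) + 2 * Q (F m) - (LINT z|M. (cmod ((g z - F n z) + (g z - F m z)))\<^sup>2)"
      unfolding Q_def by (rule l2_parallel[OF u v])
    also have "(LINT z|M. (cmod ((g z - F n z) + (g z - F m z)))\<^sup>2) = 4 * Q w"
    proof -
      have "(LINT z|M. (cmod ((g z - F n z) + (g z - F m z)))\<^sup>2) = (LINT z|M. 4 * (cmod (g z - w z))\<^sup>2)"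
      proof (rule Bochner_Integration.integral_cong)
        fix z
        have e: "(g z - F n z) + (g z - F m z) = 2 * (g z - w z)" unfolding w_def by (simp add: algebra_simps)
        show "(cmod ((g z - F n z) + (g z - F m z)))\<^sup>2 = 4 * (cmod (g z - w z))\<^sup>2"
          unfolding e norm_mult by (simp add: power_mult_distrib)
      qed simp
      then show ?thesis unfolding Q_def by simp
    qed
    finally have "(LINT z|M. (cmod (F m z - F n z))\<^sup>2) = 2 * Q (F n) + 2 * Q (F m) - 4 * Q w" .
    moreover have "D \<le> Q w" by (rule DQ[OF wH])
    ultimately show ?thesis using FQ[of n] FQ[of m] by linarith
  qed
  have cauchy: "\<forall>e>0. \<exists>N. \<forall>m\<ge>N. \<forall>n\<ge>N. L2norm M (\<lambda>z. F m z - F n z) < e"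
  proof (intro allI impI)
    fix e :: real assume e: "e > 0"
    obtain N :: nat where N: "4 / e\<^sup>2 < real N" using reals_Archimedean2 by blast
    have e2: "e\<^sup>2 > 0" using e by simp
    have "4 < e\<^sup>2 * real N" using N e2 by (simp add: field_simps)
    moreover have "e\<^sup>2 * real N < e\<^sup>2 * (real N + 1)" using e2 by (intro mult_strict_left_mono) auto
    ultimately have "4 < e\<^sup>2 * (real N + 1)" by linarith
    then have N4: "4 / (real N + 1) < e\<^sup>2" by (simp add: divide_less_eq)
    show "\<exists>N. \<forall>m\<ge>N. \<forall>n\<ge>N. L2norm M (\<lambda>z. F m z - F n z) < e"
    proof (intro exI allI impI)
      fix m n assume mn: "m \<ge> N" "n \<ge> N"
      have "2 / (real n + 1) \<le> 2 / (real N + 1)" using mn by (intro divide_left_mono) auto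
      moreover have "2 / (real m + 1) \<le> 2 / (real N + 1)" using mn by (intro divide_left_mono) auto
      ultimately have "(LINT z|M. (cmod (F m z - F n z))\<^sup>2) < e\<^sup>2"
        using Pbound[of m n] N4 by linarith
      then have "sqrt (LINT z|M. (cmod (F m z - F n z))\<^sup>2) < sqrt (e\<^sup>2)" by (rule real_sqrt_less_mono)
      then show "L2norm M (\<lambda>z. F m z - F n z) < e" using e unfolding L2norm_def by simp
    qed
  qed
  obtain h where hH: "h \<in> H" and hlim: "(\<lambda>n. L2norm M (\<lambda>z. F n z - h z)) \<longlonglongrightarrow> 0"
    using Hcomp[OF _ cauchy] F by blast
  have hsq: "square_integrable M h" by (rule Hsq[OF hH])
  have "g (x, y) = h (x, y)" if y: "y \<in> space lam" for x y
  proof -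
    define k where "k = K x y"
    have ksq: "square_integrable M k" unfolding k_def by (rule Hsq[OF HK[OF y]])
    define NK where "NK = (LINT z|M. (cmod (k z))\<^sup>2)"
    have NK0: "NK \<ge> 0" unfolding NK_def by simp
    have a: "(\<lambda>n. F n (x, y)) \<longlonglongrightarrow> h (x, y)"
    proof -
      have bnd: "norm (F n (x, y) - h (x, y)) \<le> sqrt (NK + 1) * L2norm M (\<lambda>z. F n z - h z)" for n
      proof -
        have "F n (x, y) - h (x, y) = L2inner M (\<lambda>z. F n z - h z) k"
          using Hrep[OF F y] Hrep[OF hH y] l2_inner_diff[OF Fsq hsq ksq] unfolding k_def by simp
        then have "(cmod (F n (x, y) - h (x, y)))\<^sup>2 \<le> (NK + 1) * (LINT z|M. (cmod (F n z - h z))\<^sup>2)"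
          using l2_cs[OF sqi_diff[OF Fsq hsq] ksq] unfolding NK_def by simp
        then have "sqrt ((cmod (F n (x, y) - h (x, y)))\<^sup>2) \<le> sqrt ((NK + 1) * (LINT z|M. (cmod (F n z - h z))\<^sup>2))"
          by (rule real_sqrt_le_mono)
        then show ?thesis unfolding L2norm_def by (simp add: real_sqrt_mult)
      qed
      have lim: "(\<lambda>n. sqrt (NK + 1) * L2norm M (\<lambda>z. F n z - h z)) \<longlonglongrightarrow> 0"
        using tendsto_mult_right_zero[OF hlim] by simp
      have ev: "eventually (\<lambda>n. norm (F n (x, y) - h (x, y)) \<le> sqrt (NK + 1) * L2norm M (\<lambda>z. F n z - h z)) sequentially"
        using bnd by (intro always_eventually allI)
      have "(\<lambda>n. F n (x, y) - h (x, y)) \<longlonglongrightarrow> 0"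
        by (rule Lim_null_comparison[OF ev lim])
      then show ?thesis by (rule LIM_zero_cancel)
    qed
    have b: "(\<lambda>n. F n (x, y)) \<longlonglongrightarrow> g (x, y)"
    proof -
      have bnd: "norm (F n (x, y) - g (x, y)) \<le> sqrt ((NK + 1) * (1 / (real n + 1)))" for n
      proof -
        define c where "c = g (x, y) - F n (x, y)"
        have c_eq: "c = L2inner M (\<lambda>z. g z - F n z) k"
          using rep y Hrep[OF F y] l2_inner_diff[OF g Fsq ksq] unfolding c_def k_def M_def by simp
        define s where "s = 1 / (NK + 1)"
        define t where "t = complex_of_real s * c"
        have tH: "(\<lambda>z. F n z + t * k z) \<in> H" unfolding k_def by (intro Hadd Hscale F HK y)
        have w: "square_integrable M (\<lambda>z. g z - F n z)" by (rule sqi_diff[OF g Fsq])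
        have "Q (\<lambda>z. F n z + t * k z) = (LINT z|M. (cmod ((g z - F n z) - t * k z))\<^sup>2)"
          unfolding Q_def by (rule Bochner_Integration.integral_cong) (simp_all add: algebra_simps)
        also have "\<dots> = Q (F n) - 2 * Re (cnj t * c) + (cmod t)\<^sup>2 * NK"
          unfolding Q_def NK_def c_eq by (rule l2_expand[OF w ksq])
        also have "Re (cnj t * c) = s * (cmod c)\<^sup>2"
          unfolding t_def cmod_power2 by (simp add: power2_eq_square algebra_simps)
        also have "(cmod t)\<^sup>2 = s\<^sup>2 * (cmod c)\<^sup>2"
        proof -
          have "s \<ge> 0" using NK0 by (simp add: s_def)
          then show ?thesis unfolding t_def norm_mult norm_of_real by (simp add: power_mult_distrib)
        qed
        finally have "Q (\<lambda>z. F n z + t * k z) = Q (F n) - 2 * s * (cmod c)\<^sup>2 + s\<^sup>2 * (cmod c)\<^sup>2 * NK"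
          by simp
        moreover have "D \<le> Q (\<lambda>z. F n z + t * k z)" by (rule DQ[OF tH])
        ultimately have "Q (F n) - 1 / (real n + 1) \<le> Q (F n) - 2 * s * (cmod c)\<^sup>2 + s\<^sup>2 * (cmod c)\<^sup>2 * NK"
          using FQ[of n] by linarith
        then have "(cmod c)\<^sup>2 \<le> (NK + 1) * (1 / (real n + 1))"
          by (rule key_alg[OF NK0 zero_le_power2 s_def])
        then have "sqrt ((cmod c)\<^sup>2) \<le> sqrt ((NK + 1) * (1 / (real n + 1)))" by (rule real_sqrt_le_mono)
        then show ?thesis unfolding c_def by (simp add: norm_minus_commute)
      qed
      have "(\<lambda>n. 1 / (real n + 1)) \<longlonglongrightarrow> 0" using LIMSEQ_inverse_real_of_nat by (simp add: inverse_eq_divide add.commute)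
      then have "(\<lambda>n. (NK + 1) * (1 / (real n + 1))) \<longlonglongrightarrow> 0" by (rule tendsto_mult_right_zero)
      then have "(\<lambda>n. sqrt ((NK + 1) * (1 / (real n + 1)))) \<longlonglongrightarrow> sqrt 0" by (rule tendsto_real_sqrt)
      then have lim: "(\<lambda>n. sqrt ((NK + 1) * (1 / (real n + 1)))) \<longlonglongrightarrow> 0" by simp
      have ev: "eventually (\<lambda>n. norm (F n (x, y) - g (x, y)) \<le> sqrt ((NK + 1) * (1 / (real n + 1)))) sequentially"
        using bnd by (intro always_eventually allI)
      have "(\<lambda>n. F n (x, y) - g (x, y)) \<longlonglongrightarrow> 0"
        by (rule Lim_null_comparison[OF ev lim])
      then show ?thesis by (rule LIM_zero_cancel)
    qed
    from a b show ?thesis using LIMSEQ_unique by metis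
  qed
  then show ?thesis unfolding memH_def using hH by metis
qed



theorem proposition6p2:
  fixes nu :: "'g::{ab_group_add, t2_space} measure"
    and lam :: "'y measure"
    and H :: "('g \<times> 'y \<Rightarrow> complex) set"
    and K :: "'g \<Rightarrow> 'y \<Rightarrow> 'g \<times> 'y \<Rightarrow> complex"
    and a :: 'g
  assumes "lca_group TYPE('g)"
    and "haar_measure nu"
    and "rkhs nu lam H K"
    and "\<forall>u x. \<forall>v\<in>space lam. \<forall>y\<in>space lam. K x y (u, v) = K 0 y (u - x, v)"
  shows "in_A nu lam H (\<lambda>x y v. K a v (x, y)) \<and>
         (\<forall>f\<in>H. \<forall>x. \<forall>y\<in>space lam. f (x - a, y) = S_op nu lam (\<lambda>x y v. K a v (x, y)) f (x, y))"
proof -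
  note lca = assms(1) and haar = assms(2) and rk = assms(3)
  define M where "M = prodM nu lam"
  have cov: "\<And>u x v y. v \<in> space lam \<Longrightarrow> y \<in> space lam \<Longrightarrow> K x y (u, v) = K 0 y (u - x, v)"
    using assms(4) by blast
  have Hsq: "\<And>f. f \<in> H \<Longrightarrow> square_integrable M f" using rk unfolding rkhs_def M_def by blast
  have HK: "\<And>x y. y \<in> space lam \<Longrightarrow> K x y \<in> H" using rk unfolding rkhs_def by blast
  have Hrep: "\<And>f x y. f \<in> H \<Longrightarrow> y \<in> space lam \<Longrightarrow> f (x, y) = L2inner M f (K x y)"
    using rk unfolding rkhs_def M_def by blast
  have spM: "space M = space nu \<times> space lam" unfolding M_def by (simp add: space_pair_measure)
  have sym: "K x y (u, v) = cnj (K u v (x, y))" if y: "y \<in> space lam" and v: "v \<in> space lam" for x y u v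
  proof -
    have "K x y (u, v) = L2inner M (K x y) (K u v)" by (rule Hrep[OF HK[OF y] v])
    also have "\<dots> = cnj (L2inner M (K u v) (K x y))"
      unfolding L2inner_def Bochner_Integration.integral_cnj[symmetric] by (simp add: mult.commute)
    also have "L2inner M (K u v) (K x y) = K u v (x, y)" by (rule Hrep[OF HK[OF v] y, symmetric])
    finally show ?thesis .
  qed
  have part2: "f (x - a, y) = S_op nu lam (\<lambda>x y v. K a v (x, y)) f (x, y)"
    if f: "f \<in> H" and y: "y \<in> space lam" for f x y
  proof -
    have "f (x - a, y) = (CLINT z|M. f z * cnj (K (x - a) y z))"
      using Hrep[OF f y] unfolding L2inner_def by simp
    also have "\<dots> = (CLINT z|M. f z * K a (snd z) (x - fst z, y))"
    proof (rule Bochner_Integration.integral_cong)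
      fix z assume "z \<in> space M"
      then obtain u v where z: "z = (u, v)" and v: "v \<in> space lam" using spM by auto
      have "cnj (K (x - a) y (u, v)) = K u v (x - a, y)" using sym[OF y v] by simp
      also have "\<dots> = K 0 v (x - a - u, y)" by (rule cov[OF y v])
      also have "\<dots> = K 0 v (x - u - a, y)" by (simp add: algebra_simps)
      also have "\<dots> = K a v (x - u, y)" by (rule cov[OF y v, symmetric])
      finally show "f z * cnj (K (x - a) y z) = f z * K a (snd z) (x - fst z, y)" using z by simp
    qed simp
    also have "\<dots> = S_op nu lam (\<lambda>x y v. K a v (x, y)) f (x, y)"
      unfolding S_op_def M_def by simp
    finally show ?thesis .
  qed
  have trans: "memH H (space lam) (\<lambda>z. f (fst z - a, snd z))"
    and tnorm: "(LINT z|M. (cmod (f (fst z - a, snd z)))\<^sup>2) = (LINT z|M. (cmod (f z))\<^sup>2)"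
    if f: "f \<in> H" for f
  proof -
    have fsq: "square_integrable M f" by (rule Hsq[OF f])
    have fm: "f \<in> borel_measurable M" using fsq by (rule sqi_meas)
    have fm2: "(\<lambda>z. (cmod (f z))\<^sup>2) \<in> borel_measurable M" using fm by simp
    have sm: "(\<lambda>z. (fst z + (-a), snd z)) \<in> measurable M M" unfolding M_def by (rule shift_meas[OF lca haar])
    have gm: "(\<lambda>z. f (fst z - a, snd z)) \<in> borel_measurable M"
      using measurable_compose[OF sm fm] by simp
    have "(LINT z|M. (cmod (f (fst z + (-a), snd z)))\<^sup>2) = (LINT z|M. (cmod (f z))\<^sup>2)"
      using prod_integral(1)[OF lca haar fm2[unfolded M_def], of "-a"] unfolding M_def by simp
    then show "(LINT z|M. (cmod (f (fst z - a, snd z)))\<^sup>2) = (LINT z|M. (cmod (f z))\<^sup>2)" by simp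
    have "integrable M (\<lambda>z. (cmod (f (fst z + (-a), snd z)))\<^sup>2)"
      using prod_integral(2)[OF lca haar fm2[unfolded M_def], of "-a"] sqi_int[OF fsq] unfolding M_def by simp
    then have gsq: "square_integrable M (\<lambda>z. f (fst z - a, snd z))"
      unfolding square_integrable_def using gm by simp
    have rep: "\<forall>x. \<forall>y\<in>space lam. (\<lambda>z. f (fst z - a, snd z)) (x, y) = L2inner M (\<lambda>z. f (fst z - a, snd z)) (K x y)"
    proof (intro allI ballI)
      fix x y assume y: "y \<in> space lam"
      define phi where "phi z = f z * cnj (K (x - a) y z)" for z
      have km: "K (x - a) y \<in> borel_measurable M" using Hsq[OF HK[OF y]] by (rule sqi_meas)
      have phim: "phi \<in> borel_measurable M" unfolding phi_def using fm km by (intro borel_measurable_times cnj_meas)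
      have "(\<lambda>z. f (fst z - a, snd z)) (x, y) = L2inner M f (K (x - a) y)" using Hrep[OF f y] by simp
      also have "\<dots> = (CLINT z|M. phi z)" unfolding L2inner_def phi_def by simp
      also have "\<dots> = (CLINT z|M. phi (fst z + (-a), snd z))"
        using prod_integral(1)[OF lca haar phim[unfolded M_def], of "-a"] unfolding M_def by simp
      also have "\<dots> = L2inner M (\<lambda>z. f (fst z - a, snd z)) (K x y)"
        unfolding L2inner_def
      proof (rule Bochner_Integration.integral_cong)
        fix z assume "z \<in> space M"
        then obtain u v where z: "z = (u, v)" and v: "v \<in> space lam" using spM by auto
        have "K (x - a) y (u + - a, v) = K 0 y (u + - a - (x - a), v)" by (rule cov[OF v y])
        also have "\<dots> = K 0 y (u - x, v)" by (simp add: algebra_simps)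
        also have "\<dots> = K x y (u, v)" by (rule cov[OF v y, symmetric])
        finally show "phi (fst z + - a, snd z) = f (fst z - a, snd z) * cnj (K x y z)"
          unfolding phi_def z by simp
      qed simp
      finally show "(\<lambda>z. f (fst z - a, snd z)) (x, y) = L2inner M (\<lambda>z. f (fst z - a, snd z)) (K x y)" .
    qed
    show "memH H (space lam) (\<lambda>z. f (fst z - a, snd z))"
      by (rule proj[OF rk gsq[unfolded M_def] rep[unfolded M_def]])
  qed
  have A0: "in_A0 lam H (\<lambda>x y v. K a v (x, y))"
    unfolding in_A0_def
  proof (intro conjI ballI)
    fix v assume v: "v \<in> space lam"
    show "memH H (space lam) (\<lambda>(x, y). K a v (x, y))"
      unfolding memH_def using HK[OF v] by (intro bexI[of _ "K a v"]) auto
  next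
    fix y assume y: "y \<in> space lam"
    show "memH H (space lam) (\<lambda>(u, v). cnj (K a v (- u, y)))"
      unfolding memH_def
    proof (intro bexI[of _ "K (-a) y"] allI ballI)
      fix u v assume v: "v \<in> space lam"
      have "K (-a) y (u, v) = K 0 y (u - (-a), v)" by (rule cov[OF v y])
      also have "\<dots> = K 0 y (a - (-u), v)" by (simp add: algebra_simps)
      also have "\<dots> = K (-u) y (a, v)" by (rule cov[OF v y, symmetric])
      also have "\<dots> = cnj (K a v (- u, y))" by (rule sym[OF y v])
      finally show "K (-a) y (u, v) = (\<lambda>(u, v). cnj (K a v (- u, y))) (u, v)" by simp
    qed (rule HK[OF y])
  qed
  have memS: "memH H (space lam) (S_op nu lam (\<lambda>x y v. K a v (x, y)) f)" if f: "f \<in> H" for f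
  proof -
    obtain h where hH: "h \<in> H" and h: "\<forall>x. \<forall>y\<in>space lam. h (x, y) = (\<lambda>z. f (fst z - a, snd z)) (x, y)"
      using trans[OF f] unfolding memH_def by blast
    show ?thesis unfolding memH_def
      using hH h part2[OF f] by (intro bexI[of _ h]) auto
  qed
  have bound: "L2norm M (S_op nu lam (\<lambda>x y v. K a v (x, y)) f) \<le> 1 * L2norm M f" if f: "f \<in> H" for f
  proof -
    have "(LINT z|M. (cmod (S_op nu lam (\<lambda>x y v. K a v (x, y)) f z))\<^sup>2) = (LINT z|M. (cmod (f (fst z - a, snd z)))\<^sup>2)"
    proof (rule Bochner_Integration.integral_cong)
      fix z assume "z \<in> space M"
      then obtain u v where z: "z = (u, v)" and v: "v \<in> space lam" using spM by auto
      show "(cmod (S_op nu lam (\<lambda>x y v. K a v (x, y)) f z))\<^sup>2 = (cmod (f (fst z - a, snd z)))\<^sup>2"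
        using part2[OF f v, of u] z by simp
    qed simp
    also have "\<dots> = (LINT z|M. (cmod (f z))\<^sup>2)" by (rule tnorm[OF f])
    finally show ?thesis unfolding L2norm_def by simp
  qed
  show ?thesis
    unfolding in_A_def using A0 memS bound part2 unfolding M_def by blast
qed


end
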